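(* Let $G$ be any of the calculi $\mathbf{GE},\mathbf{GM},\mathbf{GMC},\mathbf{GEN},\mathbf{GMN},\mathbf{GK},\mathbf{GCE},\mathbf{GCM},\mathbf{GCMC},\mathbf{GCEN},\mathbf{GCMN},\mathbf{GCK},\mathbf{GCKID},\mathbf{GCKCEM},\mathbf{GCKCEMID}$. If $G$ has the modal uniform Lyndon interpolation property (MULIP), then $G$ has ULIP. Likewise, if $G$ has the modal uniform interpolation property (MUIP), then $G$ has UIP.
   Context: Formulas: atoms, $\bot$, $\wedge,\vee,\to$ and unary $\Box$ (for $\mathbf{GE},\dots,\mathbf{GK}$) or binary $\triangleright$ (for the calculi named $\mathbf{GC}\dots$). Weight: $w(\bot)=w(p)=0$, $w(A\odot B)=w(A)+w(B)+1$ for $\odot\in\{\wedge,\vee,\to,\triangleright\}$, $w(\Box A)=w(A)+1$; the weight of a sequent is the sum of the weights of its formulas; $S$ is lower than $T$ if its weight is smaller. Positive/negative variables: $V^+(p)=\{p\}$, $V^-(p)=\varnothing$; $V^\pm(\bot)=\varnothing$; $V^\pm(\phi\odot\psi)=V^\pm(\phi)\cup V^\pm(\psi)$ for $\odot\in\{\wedge,\vee\}$; $V^+(\phi\to\psi)=V^-(\phi)\cup V^+(\psi)$, $V^-(\phi\to\psi)=V^+(\phi)\cup V^-(\psi)$; $V^\pm(\Box\phi)=V^\pm(\phi)$; $V^+(\phi\triangleright\psi)=V^-(\phi)\cup V^+(\psi)$, $V^-(\phi\triangleright\psi)=V^+(\phi)\cup V^-(\psi)$; $V=V^+\cup V^-$;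 $p^\circ$-free means $p\notin V^\circ$, $\diamond$ is the sign opposite to $\circ\in\{+,-\}$. For $S=\Gamma\Rightarrow\Delta$: $V^+(S)=\bigcup_{\gamma\in\Gamma}V^-(\gamma)\cup\bigcup_{\delta\in\Delta}V^+(\delta)$, $V^-(S)$ dually; $(\Gamma\Rightarrow\Delta)\cdot(\Pi\Rightarrow\Lambda)=(\Gamma,\Pi\Rightarrow\Delta,\Lambda)$. Calculi: $\mathbf{G3W}$ has axioms $\Gamma,p\Rightarrow p,\Delta$ ($p$ atomic), $\Gamma,\bot\Rightarrow\Delta$, the rules $L\wedge$ (from $\Gamma,\phi,\psi\Rightarrow\Delta$ infer $\Gamma,\phi\wedge\psi\Rightarrow\Delta$), $R\wedge$ (from $\Gamma\Rightarrow\phi,\Delta$, $\Gamma\Rightarrow\psi,\Delta$ infer $\Gamma\Rightarrow\phi\wedge\psi,\Delta$), $L\vee$ (from $\Gamma,\phi\Rightarrow\Delta$, $\Gamma,\psi\Rightarrow\Delta$ infer $\Gamma,\phi\vee\psi\Rightarrow\Delta$), $R\vee$ (from $\Gamma\Rightarrow\phi,\psi,\Delta$ infer $\Gamma\Rightarrow\phi\vee\psi,\Delta$), $L\to$ (from $\Gamma\Rightarrow\phi,\Delta$, $\Gamma,\psi\Rightarrow\Delta$ infer $\Gamma,\phi\to\psi\Rightarrow\Delta$), $R\to$ (from $\Gamma,\phi\Rightarrow\psi,\Delta$ infer $\Gamma\Rightarrow\phi\to\psi,\Delta$), and left/right weakening. "$\alpha\Leftrightarrow\beta$" as a premise abbreviates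 $\alpha\Rightarrow\beta$ and $\beta\Rightarrow\alpha$. Modal rules: $(E)$ from $\phi\Leftrightarrow\psi$ infer $\Box\phi\Rightarrow\Box\psi$; $(M)$ from $\phi\Rightarrow\psi$ infer $\Box\phi\Rightarrow\Box\psi$; $(MC)$ ($n\ge1$) from $\phi_1,\dots,\phi_n\Rightarrow\psi$ infer $\Box\phi_1,\dots,\Box\phi_n\Rightarrow\Box\psi$; $(N)$ from $\Rightarrow\psi$ infer $\Rightarrow\Box\psi$. Conditional rules: $(CE)$ from $\phi_0\Leftrightarrow\phi_1$, $\psi_0\Leftrightarrow\psi_1$ infer $\phi_1\triangleright\psi_1\Rightarrow\phi_0\triangleright\psi_0$; $(CM)$ from $\phi_0\Leftrightarrow\phi_1$, $\psi_1\Rightarrow\psi_0$ infer the same; $(CMC)$ ($n\ge1$) from $\phi_0\Leftrightarrow\phi_i$ ($1\le i\le n$), $\psi_1,\dots,\psi_n\Rightarrow\psi_0$ infer $\phi_1\triangleright\psi_1,\dots,\phi_n\triangleright\psi_n\Rightarrow\phi_0\triangleright\psi_0$; $(CN)$ from $\Rightarrow\psi_0$ infer $\Rightarrow\phi_0\triangleright\psi_0$; $(CKID)$ (finite possibly empty $I$) from $\phi_0\Leftrightarrow\phi_i$ ($i\in I$), $\phi_0,\{\psi_i\}_{i\in I}\Rightarrow\psi_0$ infer $\{\phi_i\triangleright\psi_i\}_{i\in I}\Rightarrow\phi_0\triangleright\psi_0$; $(CKCEM)$ from $\phi_0\Leftrightarrow\phi_r$ ($r\in I\cup J$), $\{\psi_i\}_{i\in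 I}\Rightarrow\psi_0,\{\psi_j\}_{j\in J}$ infer $\{\phi_i\triangleright\psi_i\}_{i\in I}\Rightarrow\phi_0\triangleright\psi_0,\{\phi_j\triangleright\psi_j\}_{j\in J}$; $(CKCEMID)$ as $(CKCEM)$ with $\phi_0$ added to the antecedent of the last premise. $\mathbf{GE},\mathbf{GM},\mathbf{GMC}$ = $\mathbf{G3W}+(E),(M),(MC)$; $\mathbf{GEN},\mathbf{GMN},\mathbf{GK}$ = these $+(N)$; $\mathbf{GCE},\mathbf{GCM},\mathbf{GCMC},\mathbf{GCKID},\mathbf{GCKCEM},\mathbf{GCKCEMID}$ = $\mathbf{G3W}+(CE),(CM),(CMC),(CKID),(CKCEM),(CKCEMID)$; $\mathbf{GCEN},\mathbf{GCMN},\mathbf{GCK}$ = $\mathbf{GCE},\mathbf{GCM},\mathbf{GCMC}+(CN)$. The modal/conditional rules of $G$ (set $\mathcal{M}$) are its rules other than the axioms and the rules of $\mathbf{G3W}$. Interpolants: for a set $\mathcal{R}$ of rules of $G$, a uniform $\forall^\circ_p$-interpolant of $S$ w.r.t. $\mathcal{R}$ is a $p^\circ$-free formula $\theta$ with $V^\dagger(\theta)\subseteq V^\dagger(S)$ for both $\dagger$, $G\vdash S\cdot(\theta\Rightarrow)$, and such that for every $\Gamma\Rightarrow\Delta$ with $p\notin V^\diamond(\Gamma\Rightarrow\Delta)$, if $S\cdot(\Gamma\Rightarrow\Delta)$ has a $G$-derivation whose last inference is an instance of a rule in $\mathcal{R}$ then $G\vdash\Gamma\Rightarrow\theta,\Delta$.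 A uniform $\forall^\circ_p$-interpolant of $S$ (in $G$) is the same with the last condition replaced by: $G\vdash S\cdot(\Gamma\Rightarrow\Delta)$ implies $G\vdash\Gamma\Rightarrow\theta,\Delta$. $G$ has ULIP if every $S,p,\circ$ admits a uniform $\forall^\circ_p$-interpolant. $\mathcal{U}^\circ_p(S)$: every sequent lower than $S$ has a uniform $\forall^\circ_p$-interpolant in $G$. $G$ has MULIP if for every $S,p,\circ$ there is a formula $\theta$ such that, if $\mathcal{U}^\circ_p(S)$ holds, then $\theta$ is a uniform $\forall^\circ_p$-interpolant of $S$ w.r.t. $\mathcal{M}$. UIP and MUIP are defined identically with all polarities dropped ($\theta$ $p$-free, $V(\theta)\subseteq V(S)$, $\Gamma\Rightarrow\Delta$ $p$-free, $\mathcal{U}_p(S)$ accordingly). *)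

theory Defs
  imports Main "HOL-Library.Multiset"
begin

text \<open>One datatype for both languages: Box is the unary modality (calculi GE..GK),
  Cond is the binary conditional (calculi GC..). Each calculus only uses its own
  language, see lang below.\<close>

datatype fm =
    Atom nat
  | Bot
  | And fm fm
  | Or fm fm
  | Imp fm fm
  | Box fm
  | Cond fm fm

fun weight :: "fm \<Rightarrow> nat" where
  "weight (Atom p) = 0"
| "weight Bot = 0"
| "weight (And a b) = weight a + weight b + 1"
| "weight (Or a b) = weight a + weight b + 1"
| "weight (Imp a b) = weight a + weight b + 1"
| "weight (Cond a b) = weight a + weight b + 1"
| "weight (Box a) = weight a + 1"

text \<open>Polarised variables: vars True = V^+, vars False = V^-.\<close>
fun vars :: "bool \<Rightarrow> fm \<Rightarrow> nat set" where
  "vars b (Atom p) = (if b then {p} else {})"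
| "vars b Bot = {}"
| "vars b (And x y) = vars b x \<union> vars b y"
| "vars b (Or x y) = vars b x \<union> vars b y"
| "vars b (Imp x y) = vars (\<not> b) x \<union> vars b y"
| "vars b (Box x) = vars b x"
| "vars b (Cond x y) = vars (\<not> b) x \<union> vars b y"

definition allvars :: "fm \<Rightarrow> nat set" where
  "allvars x = vars True x \<union> vars False x"

type_synonym seq = "fm multiset \<times> fm multiset"

definition sweight :: "seq \<Rightarrow> nat" where
  "sweight S = (\<Sum>x\<in>#fst S. weight x) + (\<Sum>x\<in>#snd S. weight x)"

definition svars :: "bool \<Rightarrow> seq \<Rightarrow> nat set" where
  "svars b S = (\<Union>g\<in>set_mset (fst S). vars (\<not> b) g) \<union> (\<Union>d\<in>set_mset (snd S). vars b d)"

definition sallvars :: "seq \<Rightarrow> nat set" where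
  "sallvars S = svars True S \<union> svars False S"

definition sprod :: "seq \<Rightarrow> seq \<Rightarrow> seq" where
  "sprod S T = (fst S + fst T, snd S + snd T)"

datatype calculus =
    GE | GM | GMC | GEN | GMN | GK
  | GCE | GCM | GCMC | GCEN | GCMN | GCK | GCKID | GCKCEM | GCKCEMID

definition modal_calc :: "calculus \<Rightarrow> bool" where
  "modal_calc G \<longleftrightarrow> G \<in> {GE, GM, GMC, GEN, GMN, GK}"

fun in_lang :: "bool \<Rightarrow> fm \<Rightarrow> bool" where
  "in_lang m (Atom p) = True"
| "in_lang m Bot = True"
| "in_lang m (And x y) = (in_lang m x \<and> in_lang m y)"
| "in_lang m (Or x y) = (in_lang m x \<and> in_lang m y)"
| "in_lang m (Imp x y) = (in_lang m x \<and> in_lang m y)"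
| "in_lang m (Box x) = (m \<and> in_lang m x)"
| "in_lang m (Cond x y) = ((\<not> m) \<and> in_lang m x \<and> in_lang m y)"

definition lang :: "calculus \<Rightarrow> fm \<Rightarrow> bool" where
  "lang G x = in_lang (modal_calc G) x"

definition slang :: "calculus \<Rightarrow> seq \<Rightarrow> bool" where
  "slang G S \<longleftrightarrow> (\<forall>x\<in>#fst S. lang G x) \<and> (\<forall>x\<in>#snd S. lang G x)"

datatype rule =
    AxAt | AxBot | LAnd | RAnd | LOr | ROr | LImp | RImp | LW | RW
  | RE | RM | RMC | RN
  | RCE | RCM | RCMC | RCN | RCKID | RCKCEM | RCKCEMID

definition eqv :: "fm \<Rightarrow> fm \<Rightarrow> seq list" where
  "eqv a b = [({#a#}, {#b#}), ({#b#}, {#a#})]"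

inductive inst :: "rule \<Rightarrow> seq list \<Rightarrow> seq \<Rightarrow> bool" where
  axat: "inst AxAt [] (\<Gamma> + {#Atom p#}, {#Atom p#} + \<Delta>)"
| axbot: "inst AxBot [] (\<Gamma> + {#Bot#}, \<Delta>)"
| land: "inst LAnd [(\<Gamma> + {#a, b#}, \<Delta>)] (\<Gamma> + {#And a b#}, \<Delta>)"
| rand: "inst RAnd [(\<Gamma>, {#a#} + \<Delta>), (\<Gamma>, {#b#} + \<Delta>)] (\<Gamma>, {#And a b#} + \<Delta>)"
| lor: "inst LOr [(\<Gamma> + {#a#}, \<Delta>), (\<Gamma> + {#b#}, \<Delta>)] (\<Gamma> + {#Or a b#}, \<Delta>)"
| ror: "inst ROr [(\<Gamma>, {#a, b#} + \<Delta>)] (\<Gamma>, {#Or a b#} + \<Delta>)"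
| limp: "inst LImp [(\<Gamma>, {#a#} + \<Delta>), (\<Gamma> + {#b#}, \<Delta>)] (\<Gamma> + {#Imp a b#}, \<Delta>)"
| rimp: "inst RImp [(\<Gamma> + {#a#}, {#b#} + \<Delta>)] (\<Gamma>, {#Imp a b#} + \<Delta>)"
| lw: "inst LW [(\<Gamma>, \<Delta>)] (\<Gamma> + {#a#}, \<Delta>)"
| rw: "inst RW [(\<Gamma>, \<Delta>)] (\<Gamma>, {#a#} + \<Delta>)"
| e: "inst RE (eqv a b) ({#Box a#}, {#Box b#})"
| m: "inst RM [({#a#}, {#b#})] ({#Box a#}, {#Box b#})"
| mc: "as \<noteq> [] \<Longrightarrow> inst RMC [(mset as, {#b#})] (mset (map Box as), {#Box b#})"
| n: "inst RN [({#}, {#b#})] ({#}, {#Box b#})"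
| ce: "inst RCE (eqv a0 a1 @ eqv b0 b1) ({#Cond a1 b1#}, {#Cond a0 b0#})"
| cm: "inst RCM (eqv a0 a1 @ [({#b1#}, {#b0#})]) ({#Cond a1 b1#}, {#Cond a0 b0#})"
| cmc: "xs \<noteq> [] \<Longrightarrow>
        inst RCMC (concat (map (\<lambda>(a, b). eqv a0 a) xs) @ [(mset (map snd xs), {#b0#})])
                  (mset (map (\<lambda>(a, b). Cond a b) xs), {#Cond a0 b0#})"
| cn: "inst RCN [({#}, {#b0#})] ({#}, {#Cond a0 b0#})"
| ckid: "inst RCKID (concat (map (\<lambda>(a, b). eqv a0 a) xs) @ [({#a0#} + mset (map snd xs), {#b0#})])
                   (mset (map (\<lambda>(a, b). Cond a b) xs), {#Cond a0 b0#})"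
| ckcem: "inst RCKCEM (concat (map (\<lambda>(a, b). eqv a0 a) (xs @ ys))
                       @ [(mset (map snd xs), {#b0#} + mset (map snd ys))])
                  (mset (map (\<lambda>(a, b). Cond a b) xs),
                   {#Cond a0 b0#} + mset (map (\<lambda>(a, b). Cond a b) ys))"
| ckcemid: "inst RCKCEMID (concat (map (\<lambda>(a, b). eqv a0 a) (xs @ ys))
                       @ [({#a0#} + mset (map snd xs), {#b0#} + mset (map snd ys))])
                  (mset (map (\<lambda>(a, b). Cond a b) xs),
                   {#Cond a0 b0#} + mset (map (\<lambda>(a, b). Cond a b) ys))"

definition g3w_rules :: "rule set" where
  "g3w_rules = {AxAt, AxBot, LAnd, RAnd, LOr, ROr, LImp, RImp, LW, RW}"

fun modal_rules :: "calculus \<Rightarrow> rule set" where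
  "modal_rules GE = {RE}"
| "modal_rules GM = {RM}"
| "modal_rules GMC = {RMC}"
| "modal_rules GEN = {RE, RN}"
| "modal_rules GMN = {RM, RN}"
| "modal_rules GK = {RMC, RN}"
| "modal_rules GCE = {RCE}"
| "modal_rules GCM = {RCM}"
| "modal_rules GCMC = {RCMC}"
| "modal_rules GCEN = {RCE, RCN}"
| "modal_rules GCMN = {RCM, RCN}"
| "modal_rules GCK = {RCMC, RCN}"
| "modal_rules GCKID = {RCKID}"
| "modal_rules GCKCEM = {RCKCEM}"
| "modal_rules GCKCEMID = {RCKCEMID}"

definition rules :: "calculus \<Rightarrow> rule set" where
  "rules G = g3w_rules \<union> modal_rules G"

inductive derivable :: "calculus \<Rightarrow> seq \<Rightarrow> bool" for G where
  step: "r \<in> rules G \<Longrightarrow> inst r ps c \<Longrightarrow> slang G c \<Longrightarrow>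
         (\<And>s. s \<in> set ps \<Longrightarrow> derivable G s) \<Longrightarrow> derivable G c"

definition derivable_last :: "calculus \<Rightarrow> rule set \<Rightarrow> seq \<Rightarrow> bool" where
  "derivable_last G R c \<longleftrightarrow>
     slang G c \<and> (\<exists>r ps. r \<in> R \<and> r \<in> rules G \<and> inst r ps c \<and> (\<forall>s\<in>set ps. derivable G s))"

text \<open>Polarity pol: True = +, False = -; the opposite polarity is \<not> pol.\<close>

definition ULI_base :: "calculus \<Rightarrow> nat \<Rightarrow> bool \<Rightarrow> seq \<Rightarrow> fm \<Rightarrow> bool" where
  "ULI_base G p pol S \<theta> \<longleftrightarrow>
     lang G \<theta> \<and> p \<notin> vars pol \<theta> \<and>
     (\<forall>b. vars b \<theta> \<subseteq> svars b S) \<and>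
     derivable G (sprod S ({#\<theta>#}, {#}))"

definition ULI_wrt :: "calculus \<Rightarrow> rule set \<Rightarrow> nat \<Rightarrow> bool \<Rightarrow> seq \<Rightarrow> fm \<Rightarrow> bool" where
  "ULI_wrt G R p pol S \<theta> \<longleftrightarrow>
     ULI_base G p pol S \<theta> \<and>
     (\<forall>\<Gamma> \<Delta>. slang G (\<Gamma>, \<Delta>) \<longrightarrow> p \<notin> svars (\<not> pol) (\<Gamma>, \<Delta>) \<longrightarrow>
        derivable_last G R (sprod S (\<Gamma>, \<Delta>)) \<longrightarrow> derivable G (\<Gamma>, {#\<theta>#} + \<Delta>))"

definition ULI :: "calculus \<Rightarrow> nat \<Rightarrow> bool \<Rightarrow> seq \<Rightarrow> fm \<Rightarrow> bool" where
  "ULI G p pol S \<theta> \<longleftrightarrow>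
     ULI_base G p pol S \<theta> \<and>
     (\<forall>\<Gamma> \<Delta>. slang G (\<Gamma>, \<Delta>) \<longrightarrow> p \<notin> svars (\<not> pol) (\<Gamma>, \<Delta>) \<longrightarrow>
        derivable G (sprod S (\<Gamma>, \<Delta>)) \<longrightarrow> derivable G (\<Gamma>, {#\<theta>#} + \<Delta>))"

definition ULIP :: "calculus \<Rightarrow> bool" where
  "ULIP G \<longleftrightarrow> (\<forall>S p pol. slang G S \<longrightarrow> (\<exists>\<theta>. ULI G p pol S \<theta>))"

definition Ucond :: "calculus \<Rightarrow> nat \<Rightarrow> bool \<Rightarrow> seq \<Rightarrow> bool" where
  "Ucond G p pol S \<longleftrightarrow>
     (\<forall>S'. slang G S' \<longrightarrow> sweight S' < sweight S \<longrightarrow> (\<exists>\<theta>. ULI G p pol S' \<theta>))"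

definition MULIP :: "calculus \<Rightarrow> bool" where
  "MULIP G \<longleftrightarrow> (\<forall>S p pol. slang G S \<longrightarrow>
     (\<exists>\<theta>. Ucond G p pol S \<longrightarrow> ULI_wrt G (modal_rules G) p pol S \<theta>))"

definition UI_base :: "calculus \<Rightarrow> nat \<Rightarrow> seq \<Rightarrow> fm \<Rightarrow> bool" where
  "UI_base G p S \<theta> \<longleftrightarrow>
     lang G \<theta> \<and> p \<notin> allvars \<theta> \<and> allvars \<theta> \<subseteq> sallvars S \<and>
     derivable G (sprod S ({#\<theta>#}, {#}))"

definition UI_wrt :: "calculus \<Rightarrow> rule set \<Rightarrow> nat \<Rightarrow> seq \<Rightarrow> fm \<Rightarrow> bool" where
  "UI_wrt G R p S \<theta> \<longleftrightarrow>
     UI_base G p S \<theta> \<and>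
     (\<forall>\<Gamma> \<Delta>. slang G (\<Gamma>, \<Delta>) \<longrightarrow> p \<notin> sallvars (\<Gamma>, \<Delta>) \<longrightarrow>
        derivable_last G R (sprod S (\<Gamma>, \<Delta>)) \<longrightarrow> derivable G (\<Gamma>, {#\<theta>#} + \<Delta>))"

definition UI :: "calculus \<Rightarrow> nat \<Rightarrow> seq \<Rightarrow> fm \<Rightarrow> bool" where
  "UI G p S \<theta> \<longleftrightarrow>
     UI_base G p S \<theta> \<and>
     (\<forall>\<Gamma> \<Delta>. slang G (\<Gamma>, \<Delta>) \<longrightarrow> p \<notin> sallvars (\<Gamma>, \<Delta>) \<longrightarrow>
        derivable G (sprod S (\<Gamma>, \<Delta>)) \<longrightarrow> derivable G (\<Gamma>, {#\<theta>#} + \<Delta>))"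

definition UIP :: "calculus \<Rightarrow> bool" where
  "UIP G \<longleftrightarrow> (\<forall>S p. slang G S \<longrightarrow> (\<exists>\<theta>. UI G p S \<theta>))"

definition Ucond_np :: "calculus \<Rightarrow> nat \<Rightarrow> seq \<Rightarrow> bool" where
  "Ucond_np G p S \<longleftrightarrow>
     (\<forall>S'. slang G S' \<longrightarrow> sweight S' < sweight S \<longrightarrow> (\<exists>\<theta>. UI G p S' \<theta>))"

definition MUIP :: "calculus \<Rightarrow> bool" where
  "MUIP G \<longleftrightarrow> (\<forall>S p. slang G S \<longrightarrow>
     (\<exists>\<theta>. Ucond_np G p S \<longrightarrow> UI_wrt G (modal_rules G) p S \<theta>))"

end

theory Submission
  imports Defs
begin

lemma g3w_in: "r \<in> g3w_rules \<Longrightarrow> r \<in> rules G"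
  by (simp add: rules_def)

lemma slang_simp: "slang G (A, B) \<longleftrightarrow> (\<forall>x\<in>#A. lang G x) \<and> (\<forall>x\<in>#B. lang G x)"
  by (simp add: slang_def)

lemma lang_simps[simp]:
  "lang G (And a b) = (lang G a \<and> lang G b)"
  "lang G (Or a b) = (lang G a \<and> lang G b)"
  "lang G (Imp a b) = (lang G a \<and> lang G b)"
  "lang G Bot" "lang G (Atom q)"
  by (auto simp: lang_def)

lemma dAxAt: "slang G (A, B) \<Longrightarrow> Atom q \<in># A \<Longrightarrow> Atom q \<in># B \<Longrightarrow> derivable G (A, B)"
proof -
  assume s: "slang G (A, B)" and a: "Atom q \<in># A" and b: "Atom q \<in># B"
  from a obtain A' where A: "A = add_mset (Atom q) A'" by (meson multi_member_split)
  from b obtain B' where B: "B = add_mset (Atom q) B'" by (meson multi_member_split)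
  have "inst AxAt [] (A, B)" using inst.axat[of A' q B'] A B by simp
  then show ?thesis using s by - (rule derivable.step[where r=AxAt and ps="[]"], auto simp: g3w_in g3w_rules_def)
qed

lemma dAxBot: "slang G (A, B) \<Longrightarrow> Bot \<in># A \<Longrightarrow> derivable G (A, B)"
proof -
  assume s: "slang G (A, B)" and a: "Bot \<in># A"
  from a obtain A' where A: "A = add_mset Bot A'" by (meson multi_member_split)
  have "inst AxBot [] (A, B)" using inst.axbot[of A' B] A by simp
  then show ?thesis using s by - (rule derivable.step[where r=AxBot and ps="[]"], auto simp: g3w_in g3w_rules_def)
qed

lemma dLAnd: "derivable G (add_mset a (add_mset b A), B) \<Longrightarrow> slang G (add_mset (And a b) A, B)
  \<Longrightarrow> derivable G (add_mset (And a b) A, B)"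
  using inst.land[of A a b B]
  by - (rule derivable.step[where r=LAnd and ps="[(add_mset a (add_mset b A), B)]"], auto simp: g3w_in g3w_rules_def)

lemma dRAnd: "derivable G (A, add_mset a B) \<Longrightarrow> derivable G (A, add_mset b B) \<Longrightarrow> slang G (A, add_mset (And a b) B)
  \<Longrightarrow> derivable G (A, add_mset (And a b) B)"
  using inst.rand[of A a B b]
  by - (rule derivable.step[where r=RAnd and ps="[(A, add_mset a B), (A, add_mset b B)]"], auto simp: g3w_in g3w_rules_def)

lemma dLOr: "derivable G (add_mset a A, B) \<Longrightarrow> derivable G (add_mset b A, B) \<Longrightarrow> slang G (add_mset (Or a b) A, B)
  \<Longrightarrow> derivable G (add_mset (Or a b) A, B)"
  using inst.lor[of A a B b]
  by - (rule derivable.step[where r=LOr and ps="[(add_mset a A, B), (add_mset b A, B)]"], auto simp: g3w_in g3w_rules_def)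

lemma dROr: "derivable G (A, add_mset a (add_mset b B)) \<Longrightarrow> slang G (A, add_mset (Or a b) B)
  \<Longrightarrow> derivable G (A, add_mset (Or a b) B)"
  using inst.ror[of A a b B]
  by - (rule derivable.step[where r=ROr and ps="[(A, add_mset a (add_mset b B))]"], auto simp: g3w_in g3w_rules_def)

lemma dLImp: "derivable G (A, add_mset a B) \<Longrightarrow> derivable G (add_mset b A, B) \<Longrightarrow> slang G (add_mset (Imp a b) A, B)
  \<Longrightarrow> derivable G (add_mset (Imp a b) A, B)"
  using inst.limp[of A a B b]
  by - (rule derivable.step[where r=LImp and ps="[(A, add_mset a B), (add_mset b A, B)]"], auto simp: g3w_in g3w_rules_def)

lemma dRImp: "derivable G (add_mset a A, add_mset b B) \<Longrightarrow> slang G (A, add_mset (Imp a b) B)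
  \<Longrightarrow> derivable G (A, add_mset (Imp a b) B)"
  using inst.rimp[of A a b B]
  by - (rule derivable.step[where r=RImp and ps="[(add_mset a A, add_mset b B)]"], auto simp: g3w_in g3w_rules_def)

lemma dLW: "derivable G (A, B) \<Longrightarrow> slang G (add_mset a A, B) \<Longrightarrow> derivable G (add_mset a A, B)"
  using inst.lw[of A B a]
  by - (rule derivable.step[where r=LW and ps="[(A, B)]"], auto simp: g3w_in g3w_rules_def)

lemma dRW: "derivable G (A, B) \<Longrightarrow> slang G (A, add_mset a B) \<Longrightarrow> derivable G (A, add_mset a B)"
  using inst.rw[of A B a]
  by - (rule derivable.step[where r=RW and ps="[(A, B)]"], auto simp: g3w_in g3w_rules_def)

fun Disj :: "fm list \<Rightarrow> fm" where
  "Disj [] = Bot"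
| "Disj (x # xs) = Or x (Disj xs)"

lemma lang_Disj: "(\<forall>c\<in>set xs. lang G c) \<Longrightarrow> lang G (Disj xs)"
  by (induction xs) auto

lemma vars_Disj: "vars b (Disj xs) = (\<Union>c\<in>set xs. vars b c)"
  by (induction xs) auto

lemma Disj_left: "(\<forall>c\<in>set xs. derivable G (add_mset c A, B)) \<Longrightarrow> (\<forall>c\<in>set xs. lang G c) \<Longrightarrow> slang G (A, B)
  \<Longrightarrow> derivable G (add_mset (Disj xs) A, B)"
proof (induction xs)
  case Nil
  show ?case by (rule dAxBot) (use Nil in \<open>auto simp: slang_simp\<close>)
next
  case (Cons y ys)
  then show ?case by (auto intro!: dLOr simp: slang_simp lang_Disj)
qed

lemma Disj_right: "c \<in> set xs \<Longrightarrow> derivable G (A, add_mset c B) \<Longrightarrow> (\<forall>c\<in>set xs. lang G c) \<Longrightarrow> slang G (A, B)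
  \<Longrightarrow> derivable G (A, add_mset (Disj xs) B)"
proof (induction xs)
  case Nil
  then show ?case by simp
next
  case (Cons y ys)
  have sl: "slang G (A, add_mset (Or y (Disj ys)) B)" using Cons by (auto simp: slang_simp lang_Disj)
  show ?case
  proof (cases "c = y")
    case True
    have "derivable G (A, add_mset (Disj ys) (add_mset y B))"
      by (rule dRW) (use Cons True in \<open>auto simp: slang_simp lang_Disj\<close>)
    then have "derivable G (A, add_mset y (add_mset (Disj ys) B))"
      by (simp add: add_mset_commute)
    from dROr[OF this sl] show ?thesis by simp
  next
    case False
    then have "derivable G (A, add_mset (Disj ys) B)" using Cons by auto
    then have "derivable G (A, add_mset y (add_mset (Disj ys) B))"
      by (rule dRW) (use Cons in \<open>auto simp: slang_simp lang_Disj\<close>)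
    from dROr[OF this sl] show ?thesis by simp
  qed
qed

lemma mset_split: "add_mset x G0 = A + B \<Longrightarrow>
   (\<exists>A'. A = add_mset x A' \<and> G0 = A' + B) \<or> (\<exists>B'. B = add_mset x B' \<and> G0 = A + B')"
proof -
  assume h: "add_mset x G0 = A + B"
  then have "x \<in># A + B" by (metis union_single_eq_member)
  then consider "x \<in># A" | "x \<in># B" by auto
  then show ?thesis
  proof cases
    case 1
    then obtain A' where "A = add_mset x A'" by (meson multi_member_split)
    with h show ?thesis by auto
  next
    case 2
    then obtain B' where "B = add_mset x B'" by (meson multi_member_split)
    with h show ?thesis by auto
  qed
qed


section \<open>Generic interpolants\<close>

definition pf :: "bool \<Rightarrow> nat \<Rightarrow> bool \<Rightarrow> fm \<Rightarrow> bool" where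
  "pf lyn p pol t = (if lyn then p \<notin> vars pol t else p \<notin> allvars t)"

definition vc :: "bool \<Rightarrow> seq \<Rightarrow> fm \<Rightarrow> bool" where
  "vc lyn S t = (if lyn then (\<forall>b. vars b t \<subseteq> svars b S) else allvars t \<subseteq> sallvars S)"

definition qf :: "bool \<Rightarrow> nat \<Rightarrow> bool \<Rightarrow> seq \<Rightarrow> bool" where
  "qf lyn p pol X = (if lyn then p \<notin> svars (\<not> pol) X else p \<notin> sallvars X)"

definition GI :: "calculus \<Rightarrow> bool \<Rightarrow> nat \<Rightarrow> bool \<Rightarrow> seq \<Rightarrow> fm \<Rightarrow> bool" where
  "GI G lyn p pol S t \<longleftrightarrow> lang G t \<and> pf lyn p pol t \<and> vc lyn S t \<and>
     derivable G (sprod S ({#t#}, {#})) \<and>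
     (\<forall>\<Gamma> \<Delta>. slang G (\<Gamma>, \<Delta>) \<longrightarrow> qf lyn p pol (\<Gamma>, \<Delta>) \<longrightarrow>
        derivable G (sprod S (\<Gamma>, \<Delta>)) \<longrightarrow> derivable G (\<Gamma>, {#t#} + \<Delta>))"

definition GIw :: "calculus \<Rightarrow> rule set \<Rightarrow> bool \<Rightarrow> nat \<Rightarrow> bool \<Rightarrow> seq \<Rightarrow> fm \<Rightarrow> bool" where
  "GIw G R lyn p pol S t \<longleftrightarrow> lang G t \<and> pf lyn p pol t \<and> vc lyn S t \<and>
     derivable G (sprod S ({#t#}, {#})) \<and>
     (\<forall>\<Gamma> \<Delta>. slang G (\<Gamma>, \<Delta>) \<longrightarrow> qf lyn p pol (\<Gamma>, \<Delta>) \<longrightarrow>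
        derivable_last G R (sprod S (\<Gamma>, \<Delta>)) \<longrightarrow> derivable G (\<Gamma>, {#t#} + \<Delta>))"

lemma ULI_GI: "ULI G p pol S t = GI G True p pol S t"
  by (auto simp: ULI_def ULI_base_def GI_def pf_def vc_def qf_def)

lemma ULIw_GIw: "ULI_wrt G R p pol S t = GIw G R True p pol S t"
  by (auto simp: ULI_wrt_def ULI_base_def GIw_def pf_def vc_def qf_def)

lemma UI_GI: "UI G p S t = GI G False p pol S t"
  by (auto simp: UI_def UI_base_def GI_def pf_def vc_def qf_def)

lemma UIw_GIw: "UI_wrt G R p S t = GIw G R False p pol S t"
  by (auto simp: UI_wrt_def UI_base_def GIw_def pf_def vc_def qf_def)

lemma GI_der: "GI G lyn p pol S t \<Longrightarrow> derivable G (add_mset t (fst S), snd S)"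
  by (simp add: GI_def sprod_def)

lemma GI_use: "GI G lyn p pol S t \<Longrightarrow> slang G (\<Gamma>, \<Delta>) \<Longrightarrow> qf lyn p pol (\<Gamma>, \<Delta>) \<Longrightarrow>
  derivable G (fst S + \<Gamma>, snd S + \<Delta>) \<Longrightarrow> derivable G (\<Gamma>, add_mset t \<Delta>)"
  by (simp add: GI_def sprod_def)

lemma vc_mono: "vc lyn S' t \<Longrightarrow> (\<And>b. svars b S' \<subseteq> svars b S) \<Longrightarrow> vc lyn S t"
  unfolding vc_def sallvars_def by (cases lyn; simp; blast)

lemma qf_mono: "qf lyn p pol X \<Longrightarrow> (\<And>b. svars b X' \<subseteq> svars b X) \<Longrightarrow> qf lyn p pol X'"
  unfolding qf_def sallvars_def by (cases lyn; simp; blast)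

lemma GI_cand: "GI G lyn p pol S' t \<Longrightarrow> (\<And>b. svars b S' \<subseteq> svars b S) \<Longrightarrow>
   lang G t \<and> pf lyn p pol t \<and> vc lyn S t"
  by (auto simp: GI_def intro: vc_mono)

lemma vc_And: "vc lyn S a \<Longrightarrow> vc lyn S b \<Longrightarrow> vc lyn S (And a b)"
  by (auto simp: vc_def allvars_def split: if_splits)

lemma pf_And: "pf lyn p pol a \<Longrightarrow> pf lyn p pol b \<Longrightarrow> pf lyn p pol (And a b)"
  by (auto simp: pf_def allvars_def split: if_splits)

lemma vc_Disj: "\<forall>c\<in>set xs. vc lyn S c \<Longrightarrow> vc lyn S (Disj xs)"
  by (cases lyn; simp add: vc_def allvars_def vars_Disj; blast)

lemma pf_Disj: "\<forall>c\<in>set xs. pf lyn p pol c \<Longrightarrow> pf lyn p pol (Disj xs)"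
  by (auto simp: pf_def allvars_def vars_Disj split: if_splits)

definition top :: fm where "top = Imp Bot Bot"

lemma top_props: "lang G top" "pf lyn p pol top" "vc lyn S top"
  by (auto simp: top_def pf_def vc_def allvars_def)

lemma vc_neg: "Atom q \<in># fst S \<Longrightarrow> vc lyn S (Imp (Atom q) Bot)"
  by (auto simp: vc_def allvars_def svars_def sallvars_def intro!: bexI[of _ "Atom q"])

lemma vc_atom: "Atom q \<in># snd S \<Longrightarrow> vc lyn S (Atom q)"
  by (auto simp: vc_def allvars_def svars_def sallvars_def intro!: bexI[of _ "Atom q"])

lemma pf_neg: "qf lyn p pol (\<Gamma>, \<Delta>) \<Longrightarrow> Atom q \<in># \<Delta> \<Longrightarrow> pf lyn p pol (Imp (Atom q) Bot)"
  by (auto simp: qf_def pf_def allvars_def svars_def sallvars_def split: if_splits)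

lemma pf_atom: "qf lyn p pol (\<Gamma>, \<Delta>) \<Longrightarrow> Atom q \<in># \<Gamma> \<Longrightarrow> pf lyn p pol (Atom q)"
  by (auto simp: qf_def pf_def allvars_def svars_def sallvars_def split: if_splits)

definition Rm :: "(seq \<times> seq) set" where
  "Rm = inv_image (less_than <*lex*> less_than) (\<lambda>S. (sweight S, size (fst S) + size (snd S)))"

lemma wf_Rm: "wf Rm"
  unfolding Rm_def by auto

lemma Rm_iff: "(S', S) \<in> Rm \<longleftrightarrow> sweight S' < sweight S \<or>
  (sweight S' = sweight S \<and> size (fst S') + size (snd S') < size (fst S) + size (snd S))"
  by (simp add: Rm_def)

definition candL :: "(seq \<Rightarrow> fm) \<Rightarrow> seq \<Rightarrow> fm \<Rightarrow> fm list" where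
  "candL I S x = I (fst S - {#x#}, snd S) # (case x of
     And a b \<Rightarrow> [I (add_mset a (add_mset b (fst S - {#x#})), snd S)]
   | Or a b \<Rightarrow> [And (I (add_mset a (fst S - {#x#}), snd S)) (I (add_mset b (fst S - {#x#}), snd S))]
   | Imp a b \<Rightarrow> [And (I (fst S - {#x#}, add_mset a (snd S))) (I (add_mset b (fst S - {#x#}), snd S))]
   | Atom q \<Rightarrow> [Imp (Atom q) Bot]
   | _ \<Rightarrow> [])"

definition candR :: "(seq \<Rightarrow> fm) \<Rightarrow> seq \<Rightarrow> fm \<Rightarrow> fm list" where
  "candR I S x = I (fst S, snd S - {#x#}) # (case x of
     And a b \<Rightarrow> [And (I (fst S, add_mset a (snd S - {#x#}))) (I (fst S, add_mset b (snd S - {#x#})))]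
   | Or a b \<Rightarrow> [I (fst S, add_mset a (add_mset b (snd S - {#x#})))]
   | Imp a b \<Rightarrow> [I (add_mset a (fst S), add_mset b (snd S - {#x#}))]
   | Atom q \<Rightarrow> [Atom q]
   | _ \<Rightarrow> [])"

lemma main:
  assumes M: "\<And>S. slang G S \<Longrightarrow> \<exists>t. (\<forall>S'. slang G S' \<longrightarrow> sweight S' < sweight S \<longrightarrow>
       (\<exists>t'. GI G lyn p pol S' t')) \<longrightarrow> GIw G (modal_rules G) lyn p pol S t"
    and S0: "slang G S0"
  shows "\<exists>t. GI G lyn p pol S0 t"
  using wf_Rm S0
proof (induction S0 rule: wf_induct_rule)
  case (less S)
  note slS = less.prems
  define I where "I = (\<lambda>S'. SOME t. GI G lyn p pol S' t)"
  have IS: "\<And>S'. (S', S) \<in> Rm \<Longrightarrow> slang G S' \<Longrightarrow> GI G lyn p pol S' (I S')"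
    unfolding I_def using less.IH by (metis someI_ex)
  have "\<forall>S'. slang G S' \<longrightarrow> sweight S' < sweight S \<longrightarrow> (\<exists>t'. GI G lyn p pol S' t')"
    using less.IH by (auto simp: Rm_iff)
  then obtain tM where tM: "GIw G (modal_rules G) lyn p pol S tM"
    using M[OF slS] by blast
  define C where "C = insert tM (insert top ((\<Union>x\<in>set_mset (fst S). set (candL I S x))
      \<union> (\<Union>x\<in>set_mset (snd S). set (candR I S x))))"
  have finC: "finite C" unfolding C_def by auto
  have CL: "c \<in> C" if "x \<in># fst S" "c \<in> set (candL I S x)" for x c
    using that unfolding C_def by blast
  have CR: "c \<in> C" if "x \<in># snd S" "c \<in> set (candR I S x)" for x c
    using that unfolding C_def by blast
  define good where "good c \<longleftrightarrow> lang G c \<and> pf lyn p pol c \<and> vc lyn S c \<and>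
      derivable G (add_mset c (fst S), snd S)" for c
  define xs where "xs = (SOME xs. set xs = {c\<in>C. good c})"
  have xs: "set xs = {c\<in>C. good c}"
  proof -
    have "finite {c\<in>C. good c}" using finC by simp
    then have "\<exists>xs. set xs = {c\<in>C. good c}" by (rule finite_list)
    then show ?thesis unfolding xs_def by (rule someI_ex)
  qed
  define t where "t = Disj xs"
  have langt: "lang G t" unfolding t_def by (rule lang_Disj) (auto simp: xs good_def)
  have pft: "pf lyn p pol t" unfolding t_def by (rule pf_Disj) (auto simp: xs good_def)
  have vct: "vc lyn S t" unfolding t_def by (rule vc_Disj) (auto simp: xs good_def)
  have dert: "derivable G (add_mset t (fst S), snd S)"
    unfolding t_def by (rule Disj_left) (use slS in \<open>auto simp: xs good_def slang_def\<close>)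
  have fin: "derivable G (\<Gamma>, add_mset t \<Delta>)"
    if "c \<in> C" "lang G c" "pf lyn p pol c" "vc lyn S c" "derivable G (add_mset c (fst S), snd S)"
      "slang G (\<Gamma>, \<Delta>)" "derivable G (\<Gamma>, add_mset c \<Delta>)" for \<Gamma> \<Delta> c
    unfolding t_def by (rule Disj_right[of c]) (use that in \<open>auto simp: xs good_def\<close>)
  have slSS: "\<forall>x\<in>#fst S. lang G x" "\<forall>x\<in>#snd S. lang G x" using slS by (simp_all add: slang_def)
  have key: "\<forall>\<Gamma> \<Delta>. X = (fst S + \<Gamma>, snd S + \<Delta>) \<longrightarrow> slang G (\<Gamma>, \<Delta>) \<longrightarrow> qf lyn p pol (\<Gamma>, \<Delta>)
      \<longrightarrow> derivable G (\<Gamma>, add_mset t \<Delta>)" if "derivable G X" for X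
    using that
  proof (induction rule: derivable.induct)
    case (step r ps c)
    have prem: "\<And>s. s \<in> set ps \<Longrightarrow> derivable G s" using step(4) by blast
    have ih: "\<And>s \<Gamma>' \<Delta>'. s \<in> set ps \<Longrightarrow> s = (fst S + \<Gamma>', snd S + \<Delta>') \<Longrightarrow> slang G (\<Gamma>', \<Delta>') \<Longrightarrow>
       qf lyn p pol (\<Gamma>', \<Delta>') \<Longrightarrow> derivable G (\<Gamma>', add_mset t \<Delta>')" using step(5) by blast
    show ?case
    proof (intro allI impI)
      fix \<Gamma> \<Delta> assume ceq: "c = (fst S + \<Gamma>, snd S + \<Delta>)" and sl: "slang G (\<Gamma>, \<Delta>)"
        and q: "qf lyn p pol (\<Gamma>, \<Delta>)"
      have slt: "slang G (\<Gamma>, add_mset t \<Delta>)" using sl langt by (simp add: slang_def)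
      have topcase: "derivable G (\<Gamma>, add_mset t \<Delta>)" if dS: "derivable G (fst S, snd S)"
      proof -
        have "derivable G (add_mset top (fst S), snd S)"
          by (rule dLW[OF dS]) (use slSS in \<open>auto simp: slang_def top_props\<close>)
        moreover have "derivable G (\<Gamma>, add_mset top \<Delta>)"
          unfolding top_def
          by (rule dRImp, rule dAxBot) (use sl in \<open>auto simp: slang_def\<close>)
        ultimately show ?thesis
          by (intro fin[of top]) (auto simp: C_def top_props sl)
      qed
      consider "r \<in> modal_rules G" | "r \<in> g3w_rules" using step(1) by (auto simp: rules_def)
      then show "derivable G (\<Gamma>, add_mset t \<Delta>)"
      proof cases
        case 1
        have s1: "slang G (sprod S (\<Gamma>, \<Delta>))" using step(3) ceq by (simp add: sprod_def)
        have s2: "inst r ps (sprod S (\<Gamma>, \<Delta>))" using step(2) ceq by (simp add: sprod_def)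
        have "derivable_last G (modal_rules G) (sprod S (\<Gamma>, \<Delta>))"
          unfolding derivable_last_def using s1 s2 step(1) prem 1 by blast
        then have "derivable G (\<Gamma>, add_mset tM \<Delta>)" using tM sl q by (simp add: GIw_def)
        moreover have "derivable G (add_mset tM (fst S), snd S)" using tM by (simp add: GIw_def sprod_def)
        ultimately show ?thesis using tM sl by (intro fin[of tM]) (auto simp: C_def GIw_def)
      next
        case g3w: 2
        from step(2) show ?thesis
        proof cases
          case (axat \<Gamma>0 q \<Delta>0)
          have e1: "add_mset (Atom q) \<Gamma>0 = fst S + \<Gamma>" and e2: "add_mset (Atom q) \<Delta>0 = snd S + \<Delta>"
            using ceq axat by auto
          have m1: "Atom q \<in># fst S + \<Gamma>" unfolding e1[symmetric] by simp
          have m2: "Atom q \<in># snd S + \<Delta>" unfolding e2[symmetric] by simp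
          consider "Atom q \<in># fst S" "Atom q \<in># snd S" | "Atom q \<in># fst S" "Atom q \<in># \<Delta>"
            | "Atom q \<in># \<Gamma>" "Atom q \<in># snd S" | "Atom q \<in># \<Gamma>" "Atom q \<in># \<Delta>"
            using m1 m2 by auto
          then show ?thesis
          proof cases
            case 1
            show ?thesis by (rule topcase, rule dAxAt[of _ _ _ q]) (use slSS 1 in \<open>auto simp: slang_def\<close>)
          next
            case 2
            have d1: "derivable G (fst S, add_mset (Atom q) (snd S))"
              by (rule dAxAt[of _ _ _ q]) (use slSS 2 in \<open>auto simp: slang_def\<close>)
            have d2: "derivable G (add_mset Bot (fst S), snd S)"
              by (rule dAxBot) (use slSS in \<open>auto simp: slang_def\<close>)
            have "derivable G (add_mset (Imp (Atom q) Bot) (fst S), snd S)"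
              by (rule dLImp[OF d1 d2]) (use slSS in \<open>auto simp: slang_def\<close>)
            moreover have "derivable G (\<Gamma>, add_mset (Imp (Atom q) Bot) \<Delta>)"
              by (rule dRImp, rule dAxAt[of _ _ _ q]) (use sl 2 in \<open>auto simp: slang_def\<close>)
            moreover have "Imp (Atom q) Bot \<in> C" by (rule CL[of "Atom q"]) (use 2 in \<open>simp_all add: candL_def\<close>)
            ultimately show ?thesis using 2 sl q
              by (intro fin[of "Imp (Atom q) Bot"]) (auto intro: vc_neg pf_neg)
          next
            case 3
            have "derivable G (add_mset (Atom q) (fst S), snd S)"
              by (rule dAxAt[of _ _ _ q]) (use slSS 3 in \<open>auto simp: slang_def\<close>)
            moreover have "derivable G (\<Gamma>, add_mset (Atom q) \<Delta>)"
              by (rule dAxAt[of _ _ _ q]) (use sl 3 in \<open>auto simp: slang_def\<close>)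
            moreover have "Atom q \<in> C" by (rule CR[of "Atom q"]) (use 3 in \<open>simp_all add: candR_def\<close>)
            ultimately show ?thesis using 3 sl q
              by (intro fin[of "Atom q"]) (auto intro: vc_atom pf_atom)
          next
            case 4
            show ?thesis by (rule dAxAt[of _ _ _ q]) (use slt 4 in \<open>auto simp: slang_def\<close>)
          qed
        next
          case (axbot \<Gamma>0 \<Delta>0)
          have e1: "add_mset Bot \<Gamma>0 = fst S + \<Gamma>" using ceq axbot by auto
          have m1: "Bot \<in># fst S + \<Gamma>" unfolding e1[symmetric] by simp
          then consider "Bot \<in># fst S" | "Bot \<in># \<Gamma>" by auto
          then show ?thesis
          proof cases
            case 1
            show ?thesis by (rule topcase, rule dAxBot) (use slSS 1 in \<open>auto simp: slang_def\<close>)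
          next
            case 2
            show ?thesis by (rule dAxBot) (use slt 2 in \<open>auto simp: slang_def\<close>)
          qed
        next
          case (land \<Gamma>0 a b \<Delta>0)
          have e1: "add_mset (And a b) \<Gamma>0 = fst S + \<Gamma>" and e2: "\<Delta>0 = snd S + \<Delta>"
            using ceq land by auto
          have pr: "derivable G (add_mset a (add_mset b \<Gamma>0), \<Delta>0)" using prem land by auto
          from mset_split[OF e1] show ?thesis
          proof (elim disjE exE conjE)
            fix M assume fS: "fst S = add_mset (And a b) M" and g0: "\<Gamma>0 = M + \<Gamma>"
            define S' where "S' = (add_mset a (add_mset b M), snd S)"
            have sl': "slang G S'" using slSS fS by (auto simp: S'_def slang_def)
            have R': "(S', S) \<in> Rm" using fS by (auto simp: Rm_iff S'_def sweight_def)
            have G': "GI G lyn p pol S' (I S')" using IS[OF R' sl'] .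
            have sv: "svars bb S' \<subseteq> svars bb S" for bb using fS by (auto simp: S'_def svars_def)
            have "derivable G (\<Gamma>, add_mset (I S') \<Delta>)"
              by (rule GI_use[OF G' sl q]) (use pr g0 e2 in \<open>simp add: S'_def\<close>)
            moreover have "derivable G (add_mset (I S') (fst S), snd S)"
            proof -
              have "derivable G (add_mset (I S') (add_mset a (add_mset b M)), snd S)"
                using GI_der[OF G'] by (simp add: S'_def)
              then have "derivable G (add_mset a (add_mset b (add_mset (I S') M)), snd S)"
                by (simp add: add_mset_commute)
              then have "derivable G (add_mset (And a b) (add_mset (I S') M), snd S)"
                by (rule dLAnd) (use slSS fS G' in \<open>auto simp: slang_def GI_def\<close>)
              then show ?thesis using fS by (simp add: add_mset_commute)
            qed
            moreover have "I S' \<in> C"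
              by (rule CL[of "And a b"]) (use fS in \<open>simp_all add: candL_def S'_def\<close>)
            ultimately show ?thesis using GI_cand[OF G' sv] sl by (intro fin[of "I S'"]) auto
          next
            fix \<Gamma>' assume gG: "\<Gamma> = add_mset (And a b) \<Gamma>'" and g0: "\<Gamma>0 = fst S + \<Gamma>'"
            have sl2: "slang G (add_mset a (add_mset b \<Gamma>'), \<Delta>)" using sl gG by (auto simp: slang_def)
            have q2: "qf lyn p pol (add_mset a (add_mset b \<Gamma>'), \<Delta>)"
              by (rule qf_mono[OF q]) (use gG in \<open>auto simp: svars_def\<close>)
            have "derivable G (add_mset a (add_mset b \<Gamma>'), add_mset t \<Delta>)"
              by (rule ih[OF _ _ sl2 q2]) (use land g0 e2 in auto)
            then have "derivable G (add_mset (And a b) \<Gamma>', add_mset t \<Delta>)"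
              by (rule dLAnd) (use slt gG in \<open>auto simp: slang_def\<close>)
            then show ?thesis using gG by simp
          qed
        next
          case (rand \<Gamma>0 a \<Delta>0 b)
          have e1: "\<Gamma>0 = fst S + \<Gamma>" and e2: "add_mset (And a b) \<Delta>0 = snd S + \<Delta>"
            using ceq rand by auto
          have pr1: "derivable G (\<Gamma>0, add_mset a \<Delta>0)" and pr2: "derivable G (\<Gamma>0, add_mset b \<Delta>0)"
            using prem rand by auto
          from mset_split[OF e2] show ?thesis
          proof (elim disjE exE conjE)
            fix N assume fS: "snd S = add_mset (And a b) N" and d0: "\<Delta>0 = N + \<Delta>"
            define S1 where "S1 = (fst S, add_mset a N)"
            define S2 where "S2 = (fst S, add_mset b N)"
            have G1: "GI G lyn p pol S1 (I S1)"
              by (rule IS) (use slSS fS in \<open>auto simp: S1_def slang_def Rm_iff sweight_def\<close>)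
            have G2: "GI G lyn p pol S2 (I S2)"
              by (rule IS) (use slSS fS in \<open>auto simp: S2_def slang_def Rm_iff sweight_def\<close>)
            have sv1: "svars bb S1 \<subseteq> svars bb S" for bb using fS by (auto simp: S1_def svars_def)
            have sv2: "svars bb S2 \<subseteq> svars bb S" for bb using fS by (auto simp: S2_def svars_def)
            note c1 = GI_cand[OF G1 sv1] and c2 = GI_cand[OF G2 sv2]
            have d1: "derivable G (\<Gamma>, add_mset (I S1) \<Delta>)"
              by (rule GI_use[OF G1 sl q]) (use pr1 e1 d0 in \<open>simp add: S1_def\<close>)
            have d2: "derivable G (\<Gamma>, add_mset (I S2) \<Delta>)"
              by (rule GI_use[OF G2 sl q]) (use pr2 e1 d0 in \<open>simp add: S2_def\<close>)
            have "derivable G (\<Gamma>, add_mset (And (I S1) (I S2)) \<Delta>)"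
              by (rule dRAnd[OF d1 d2]) (use sl c1 c2 in \<open>auto simp: slang_def\<close>)
            moreover have "derivable G (add_mset (And (I S1) (I S2)) (fst S), snd S)"
            proof -
              have D1: "derivable G (add_mset (I S1) (fst S), add_mset a N)"
                using GI_der[OF G1] by (simp add: S1_def)
              have D2: "derivable G (add_mset (I S2) (fst S), add_mset b N)"
                using GI_der[OF G2] by (simp add: S2_def)
              have D1': "derivable G (add_mset (I S2) (add_mset (I S1) (fst S)), add_mset a N)"
                by (rule dLW[OF D1]) (use slSS fS c1 c2 in \<open>auto simp: slang_def\<close>)
              have D2': "derivable G (add_mset (I S1) (add_mset (I S2) (fst S)), add_mset b N)"
                by (rule dLW[OF D2]) (use slSS fS c1 c2 in \<open>auto simp: slang_def\<close>)
              have D1'': "derivable G (add_mset (I S1) (add_mset (I S2) (fst S)), add_mset a N)"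
                using D1' by (simp add: add_mset_commute)
              have "derivable G (add_mset (I S1) (add_mset (I S2) (fst S)), add_mset (And a b) N)"
                by (rule dRAnd[OF D1'' D2']) (use slSS fS c1 c2 in \<open>auto simp: slang_def\<close>)
              then have "derivable G (add_mset (And (I S1) (I S2)) (fst S), add_mset (And a b) N)"
                by (rule dLAnd) (use slSS fS c1 c2 in \<open>auto simp: slang_def\<close>)
              then show ?thesis using fS by simp
            qed
            moreover have "And (I S1) (I S2) \<in> C"
              by (rule CR[of "And a b"]) (use fS in \<open>simp_all add: candR_def S1_def S2_def\<close>)
            ultimately show ?thesis using c1 c2 sl
              by (intro fin[of "And (I S1) (I S2)"]) (auto intro: pf_And vc_And)
          next
            fix \<Delta>' assume gD: "\<Delta> = add_mset (And a b) \<Delta>'" and d0: "\<Delta>0 = snd S + \<Delta>'"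
            have sl1: "slang G (\<Gamma>, add_mset a \<Delta>')" using sl gD by (auto simp: slang_def)
            have q1: "qf lyn p pol (\<Gamma>, add_mset a \<Delta>')"
              by (rule qf_mono[OF q]) (use gD in \<open>auto simp: svars_def\<close>)
            have sl2: "slang G (\<Gamma>, add_mset b \<Delta>')" using sl gD by (auto simp: slang_def)
            have q2: "qf lyn p pol (\<Gamma>, add_mset b \<Delta>')"
              by (rule qf_mono[OF q]) (use gD in \<open>auto simp: svars_def\<close>)
            have "derivable G (\<Gamma>, add_mset t (add_mset a \<Delta>'))"
              by (rule ih[OF _ _ sl1 q1]) (use rand e1 d0 in auto)
            then have h1: "derivable G (\<Gamma>, add_mset a (add_mset t \<Delta>'))" by (simp add: add_mset_commute)
            have "derivable G (\<Gamma>, add_mset t (add_mset b \<Delta>'))"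
              by (rule ih[OF _ _ sl2 q2]) (use rand e1 d0 in auto)
            then have h2: "derivable G (\<Gamma>, add_mset b (add_mset t \<Delta>'))" by (simp add: add_mset_commute)
            have "derivable G (\<Gamma>, add_mset (And a b) (add_mset t \<Delta>'))"
              by (rule dRAnd[OF h1 h2]) (use slt gD in \<open>auto simp: slang_def\<close>)
            then show ?thesis using gD by (simp add: add_mset_commute)
          qed
        next
          case (lor \<Gamma>0 a \<Delta>0 b)
          have e1: "add_mset (Or a b) \<Gamma>0 = fst S + \<Gamma>" and e2: "\<Delta>0 = snd S + \<Delta>"
            using ceq lor by auto
          have pr1: "derivable G (add_mset a \<Gamma>0, \<Delta>0)" and pr2: "derivable G (add_mset b \<Gamma>0, \<Delta>0)"
            using prem lor by auto
          from mset_split[OF e1] show ?thesis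
          proof (elim disjE exE conjE)
            fix M assume fS: "fst S = add_mset (Or a b) M" and g0: "\<Gamma>0 = M + \<Gamma>"
            define S1 where "S1 = (add_mset a M, snd S)"
            define S2 where "S2 = (add_mset b M, snd S)"
            have G1: "GI G lyn p pol S1 (I S1)"
              by (rule IS) (use slSS fS in \<open>auto simp: S1_def slang_def Rm_iff sweight_def\<close>)
            have G2: "GI G lyn p pol S2 (I S2)"
              by (rule IS) (use slSS fS in \<open>auto simp: S2_def slang_def Rm_iff sweight_def\<close>)
            have sv1: "svars bb S1 \<subseteq> svars bb S" for bb using fS by (auto simp: S1_def svars_def)
            have sv2: "svars bb S2 \<subseteq> svars bb S" for bb using fS by (auto simp: S2_def svars_def)
            note c1 = GI_cand[OF G1 sv1] and c2 = GI_cand[OF G2 sv2]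
            have d1: "derivable G (\<Gamma>, add_mset (I S1) \<Delta>)"
              by (rule GI_use[OF G1 sl q]) (use pr1 g0 e2 in \<open>simp add: S1_def\<close>)
            have d2: "derivable G (\<Gamma>, add_mset (I S2) \<Delta>)"
              by (rule GI_use[OF G2 sl q]) (use pr2 g0 e2 in \<open>simp add: S2_def\<close>)
            have "derivable G (\<Gamma>, add_mset (And (I S1) (I S2)) \<Delta>)"
              by (rule dRAnd[OF d1 d2]) (use sl c1 c2 in \<open>auto simp: slang_def\<close>)
            moreover have "derivable G (add_mset (And (I S1) (I S2)) (fst S), snd S)"
            proof -
              have D1: "derivable G (add_mset (I S1) (add_mset a M), snd S)"
                using GI_der[OF G1] by (simp add: S1_def)
              have D2: "derivable G (add_mset (I S2) (add_mset b M), snd S)"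
                using GI_der[OF G2] by (simp add: S2_def)
              have D1': "derivable G (add_mset (I S2) (add_mset (I S1) (add_mset a M)), snd S)"
                by (rule dLW[OF D1]) (use slSS fS c1 c2 in \<open>auto simp: slang_def\<close>)
              have D2': "derivable G (add_mset (I S1) (add_mset (I S2) (add_mset b M)), snd S)"
                by (rule dLW[OF D2]) (use slSS fS c1 c2 in \<open>auto simp: slang_def\<close>)
              have D1'': "derivable G (add_mset a (add_mset (I S1) (add_mset (I S2) M)), snd S)"
                using D1' by (simp add: add_mset_commute)
              have D2'': "derivable G (add_mset b (add_mset (I S1) (add_mset (I S2) M)), snd S)"
                using D2' by (simp add: add_mset_commute)
              have "derivable G (add_mset (Or a b) (add_mset (I S1) (add_mset (I S2) M)), snd S)"
                by (rule dLOr[OF D1'' D2'']) (use slSS fS c1 c2 in \<open>auto simp: slang_def\<close>)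
              then have "derivable G (add_mset (I S1) (add_mset (I S2) (add_mset (Or a b) M)), snd S)"
                by (simp add: add_mset_commute)
              then have "derivable G (add_mset (And (I S1) (I S2)) (add_mset (Or a b) M), snd S)"
                by (rule dLAnd) (use slSS fS c1 c2 in \<open>auto simp: slang_def\<close>)
              then show ?thesis using fS by simp
            qed
            moreover have "And (I S1) (I S2) \<in> C"
              by (rule CL[of "Or a b"]) (use fS in \<open>simp_all add: candL_def S1_def S2_def\<close>)
            ultimately show ?thesis using c1 c2 sl
              by (intro fin[of "And (I S1) (I S2)"]) (auto intro: pf_And vc_And)
          next
            fix \<Gamma>' assume gG: "\<Gamma> = add_mset (Or a b) \<Gamma>'" and g0: "\<Gamma>0 = fst S + \<Gamma>'"
            have sl1: "slang G (add_mset a \<Gamma>', \<Delta>)" using sl gG by (auto simp: slang_def)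
            have q1: "qf lyn p pol (add_mset a \<Gamma>', \<Delta>)"
              by (rule qf_mono[OF q]) (use gG in \<open>auto simp: svars_def\<close>)
            have sl2: "slang G (add_mset b \<Gamma>', \<Delta>)" using sl gG by (auto simp: slang_def)
            have q2: "qf lyn p pol (add_mset b \<Gamma>', \<Delta>)"
              by (rule qf_mono[OF q]) (use gG in \<open>auto simp: svars_def\<close>)
            have h1: "derivable G (add_mset a \<Gamma>', add_mset t \<Delta>)"
              by (rule ih[OF _ _ sl1 q1]) (use lor g0 e2 in auto)
            have h2: "derivable G (add_mset b \<Gamma>', add_mset t \<Delta>)"
              by (rule ih[OF _ _ sl2 q2]) (use lor g0 e2 in auto)
            have "derivable G (add_mset (Or a b) \<Gamma>', add_mset t \<Delta>)"
              by (rule dLOr[OF h1 h2]) (use slt gG in \<open>auto simp: slang_def\<close>)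
            then show ?thesis using gG by simp
          qed
        next
          case (ror \<Gamma>0 a b \<Delta>0)
          have e1: "\<Gamma>0 = fst S + \<Gamma>" and e2: "add_mset (Or a b) \<Delta>0 = snd S + \<Delta>"
            using ceq ror by auto
          have pr: "derivable G (\<Gamma>0, add_mset a (add_mset b \<Delta>0))" using prem ror by auto
          from mset_split[OF e2] show ?thesis
          proof (elim disjE exE conjE)
            fix N assume fS: "snd S = add_mset (Or a b) N" and d0: "\<Delta>0 = N + \<Delta>"
            define S' where "S' = (fst S, add_mset a (add_mset b N))"
            have G': "GI G lyn p pol S' (I S')"
              by (rule IS) (use slSS fS in \<open>auto simp: S'_def slang_def Rm_iff sweight_def\<close>)
            have sv: "svars bb S' \<subseteq> svars bb S" for bb using fS by (auto simp: S'_def svars_def)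
            have "derivable G (\<Gamma>, add_mset (I S') \<Delta>)"
              by (rule GI_use[OF G' sl q]) (use pr e1 d0 in \<open>simp add: S'_def\<close>)
            moreover have "derivable G (add_mset (I S') (fst S), snd S)"
            proof -
              have "derivable G (add_mset (I S') (fst S), add_mset a (add_mset b N))"
                using GI_der[OF G'] by (simp add: S'_def)
              then have "derivable G (add_mset (I S') (fst S), add_mset (Or a b) N)"
                by (rule dROr) (use slSS fS G' in \<open>auto simp: slang_def GI_def\<close>)
              then show ?thesis using fS by simp
            qed
            moreover have "I S' \<in> C"
              by (rule CR[of "Or a b"]) (use fS in \<open>simp_all add: candR_def S'_def\<close>)
            ultimately show ?thesis using GI_cand[OF G' sv] sl by (intro fin[of "I S'"]) auto
          next
            fix \<Delta>' assume gD: "\<Delta> = add_mset (Or a b) \<Delta>'" and d0: "\<Delta>0 = snd S + \<Delta>'"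
            have sl2: "slang G (\<Gamma>, add_mset a (add_mset b \<Delta>'))" using sl gD by (auto simp: slang_def)
            have q2: "qf lyn p pol (\<Gamma>, add_mset a (add_mset b \<Delta>'))"
              by (rule qf_mono[OF q]) (use gD in \<open>auto simp: svars_def\<close>)
            have "derivable G (\<Gamma>, add_mset t (add_mset a (add_mset b \<Delta>')))"
              by (rule ih[OF _ _ sl2 q2]) (use ror e1 d0 in auto)
            then have "derivable G (\<Gamma>, add_mset a (add_mset b (add_mset t \<Delta>')))"
              by (simp add: add_mset_commute)
            then have "derivable G (\<Gamma>, add_mset (Or a b) (add_mset t \<Delta>'))"
              by (rule dROr) (use slt gD in \<open>auto simp: slang_def\<close>)
            then show ?thesis using gD by (simp add: add_mset_commute)
          qed
        next
          case (limp \<Gamma>0 a \<Delta>0 b)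
          have e1: "add_mset (Imp a b) \<Gamma>0 = fst S + \<Gamma>" and e2: "\<Delta>0 = snd S + \<Delta>"
            using ceq limp by auto
          have pr1: "derivable G (\<Gamma>0, add_mset a \<Delta>0)" and pr2: "derivable G (add_mset b \<Gamma>0, \<Delta>0)"
            using prem limp by auto
          from mset_split[OF e1] show ?thesis
          proof (elim disjE exE conjE)
            fix M assume fS: "fst S = add_mset (Imp a b) M" and g0: "\<Gamma>0 = M + \<Gamma>"
            define S1 where "S1 = (M, add_mset a (snd S))"
            define S2 where "S2 = (add_mset b M, snd S)"
            have G1: "GI G lyn p pol S1 (I S1)"
              by (rule IS) (use slSS fS in \<open>auto simp: S1_def slang_def Rm_iff sweight_def\<close>)
            have G2: "GI G lyn p pol S2 (I S2)"
              by (rule IS) (use slSS fS in \<open>auto simp: S2_def slang_def Rm_iff sweight_def\<close>)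
            have sv1: "svars bb S1 \<subseteq> svars bb S" for bb using fS by (auto simp: S1_def svars_def)
            have sv2: "svars bb S2 \<subseteq> svars bb S" for bb using fS by (auto simp: S2_def svars_def)
            note c1 = GI_cand[OF G1 sv1] and c2 = GI_cand[OF G2 sv2]
            have d1: "derivable G (\<Gamma>, add_mset (I S1) \<Delta>)"
              by (rule GI_use[OF G1 sl q]) (use pr1 g0 e2 in \<open>simp add: S1_def\<close>)
            have d2: "derivable G (\<Gamma>, add_mset (I S2) \<Delta>)"
              by (rule GI_use[OF G2 sl q]) (use pr2 g0 e2 in \<open>simp add: S2_def\<close>)
            have "derivable G (\<Gamma>, add_mset (And (I S1) (I S2)) \<Delta>)"
              by (rule dRAnd[OF d1 d2]) (use sl c1 c2 in \<open>auto simp: slang_def\<close>)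
            moreover have "derivable G (add_mset (And (I S1) (I S2)) (fst S), snd S)"
            proof -
              have D1: "derivable G (add_mset (I S1) M, add_mset a (snd S))"
                using GI_der[OF G1] by (simp add: S1_def)
              have D2: "derivable G (add_mset (I S2) (add_mset b M), snd S)"
                using GI_der[OF G2] by (simp add: S2_def)
              have D1': "derivable G (add_mset (I S2) (add_mset (I S1) M), add_mset a (snd S))"
                by (rule dLW[OF D1]) (use slSS fS c1 c2 in \<open>auto simp: slang_def\<close>)
              have D2': "derivable G (add_mset (I S1) (add_mset (I S2) (add_mset b M)), snd S)"
                by (rule dLW[OF D2]) (use slSS fS c1 c2 in \<open>auto simp: slang_def\<close>)
              have D1'': "derivable G (add_mset (I S1) (add_mset (I S2) M), add_mset a (snd S))"
                using D1' by (simp add: add_mset_commute)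
              have D2'': "derivable G (add_mset b (add_mset (I S1) (add_mset (I S2) M)), snd S)"
                using D2' by (simp add: add_mset_commute)
              have "derivable G (add_mset (Imp a b) (add_mset (I S1) (add_mset (I S2) M)), snd S)"
                by (rule dLImp[OF D1'' D2'']) (use slSS fS c1 c2 in \<open>auto simp: slang_def\<close>)
              then have "derivable G (add_mset (I S1) (add_mset (I S2) (add_mset (Imp a b) M)), snd S)"
                by (simp add: add_mset_commute)
              then have "derivable G (add_mset (And (I S1) (I S2)) (add_mset (Imp a b) M), snd S)"
                by (rule dLAnd) (use slSS fS c1 c2 in \<open>auto simp: slang_def\<close>)
              then show ?thesis using fS by simp
            qed
            moreover have "And (I S1) (I S2) \<in> C"
              by (rule CL[of "Imp a b"]) (use fS in \<open>simp_all add: candL_def S1_def S2_def\<close>)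
            ultimately show ?thesis using c1 c2 sl
              by (intro fin[of "And (I S1) (I S2)"]) (auto intro: pf_And vc_And)
          next
            fix \<Gamma>' assume gG: "\<Gamma> = add_mset (Imp a b) \<Gamma>'" and g0: "\<Gamma>0 = fst S + \<Gamma>'"
            have sl1: "slang G (\<Gamma>', add_mset a \<Delta>)" using sl gG by (auto simp: slang_def)
            have q1: "qf lyn p pol (\<Gamma>', add_mset a \<Delta>)"
              by (rule qf_mono[OF q]) (use gG in \<open>auto simp: svars_def\<close>)
            have sl2: "slang G (add_mset b \<Gamma>', \<Delta>)" using sl gG by (auto simp: slang_def)
            have q2: "qf lyn p pol (add_mset b \<Gamma>', \<Delta>)"
              by (rule qf_mono[OF q]) (use gG in \<open>auto simp: svars_def\<close>)
            have "derivable G (\<Gamma>', add_mset t (add_mset a \<Delta>))"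
              by (rule ih[OF _ _ sl1 q1]) (use limp g0 e2 in auto)
            then have h1: "derivable G (\<Gamma>', add_mset a (add_mset t \<Delta>))" by (simp add: add_mset_commute)
            have h2: "derivable G (add_mset b \<Gamma>', add_mset t \<Delta>)"
              by (rule ih[OF _ _ sl2 q2]) (use limp g0 e2 in auto)
            have "derivable G (add_mset (Imp a b) \<Gamma>', add_mset t \<Delta>)"
              by (rule dLImp[OF h1 h2]) (use slt gG in \<open>auto simp: slang_def\<close>)
            then show ?thesis using gG by simp
          qed
        next
          case (rimp \<Gamma>0 a b \<Delta>0)
          have e1: "\<Gamma>0 = fst S + \<Gamma>" and e2: "add_mset (Imp a b) \<Delta>0 = snd S + \<Delta>"
            using ceq rimp by auto
          have pr: "derivable G (add_mset a \<Gamma>0, add_mset b \<Delta>0)" using prem rimp by auto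
          from mset_split[OF e2] show ?thesis
          proof (elim disjE exE conjE)
            fix N assume fS: "snd S = add_mset (Imp a b) N" and d0: "\<Delta>0 = N + \<Delta>"
            define S' where "S' = (add_mset a (fst S), add_mset b N)"
            have G': "GI G lyn p pol S' (I S')"
              by (rule IS) (use slSS fS in \<open>auto simp: S'_def slang_def Rm_iff sweight_def\<close>)
            have sv: "svars bb S' \<subseteq> svars bb S" for bb using fS by (auto simp: S'_def svars_def)
            have "derivable G (\<Gamma>, add_mset (I S') \<Delta>)"
              by (rule GI_use[OF G' sl q]) (use pr e1 d0 in \<open>simp add: S'_def\<close>)
            moreover have "derivable G (add_mset (I S') (fst S), snd S)"
            proof -
              have "derivable G (add_mset (I S') (add_mset a (fst S)), add_mset b N)"
                using GI_der[OF G'] by (simp add: S'_def)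
              then have "derivable G (add_mset a (add_mset (I S') (fst S)), add_mset b N)"
                by (simp add: add_mset_commute)
              then have "derivable G (add_mset (I S') (fst S), add_mset (Imp a b) N)"
                by (rule dRImp) (use slSS fS G' in \<open>auto simp: slang_def GI_def\<close>)
              then show ?thesis using fS by simp
            qed
            moreover have "I S' \<in> C"
              by (rule CR[of "Imp a b"]) (use fS in \<open>simp_all add: candR_def S'_def\<close>)
            ultimately show ?thesis using GI_cand[OF G' sv] sl by (intro fin[of "I S'"]) auto
          next
            fix \<Delta>' assume gD: "\<Delta> = add_mset (Imp a b) \<Delta>'" and d0: "\<Delta>0 = snd S + \<Delta>'"
            have sl2: "slang G (add_mset a \<Gamma>, add_mset b \<Delta>')" using sl gD by (auto simp: slang_def)
            have q2: "qf lyn p pol (add_mset a \<Gamma>, add_mset b \<Delta>')"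
              by (rule qf_mono[OF q]) (use gD in \<open>auto simp: svars_def\<close>)
            have "derivable G (add_mset a \<Gamma>, add_mset t (add_mset b \<Delta>'))"
              by (rule ih[OF _ _ sl2 q2]) (use rimp e1 d0 in auto)
            then have "derivable G (add_mset a \<Gamma>, add_mset b (add_mset t \<Delta>'))"
              by (simp add: add_mset_commute)
            then have "derivable G (\<Gamma>, add_mset (Imp a b) (add_mset t \<Delta>'))"
              by (rule dRImp) (use slt gD in \<open>auto simp: slang_def\<close>)
            then show ?thesis using gD by (simp add: add_mset_commute)
          qed
        next
          case (lw \<Gamma>0 \<Delta>0 a)
          have e1: "add_mset a \<Gamma>0 = fst S + \<Gamma>" and e2: "\<Delta>0 = snd S + \<Delta>"
            using ceq lw by auto
          have pr: "derivable G (\<Gamma>0, \<Delta>0)" using prem lw by auto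
          from mset_split[OF e1] show ?thesis
          proof (elim disjE exE conjE)
            fix M assume fS: "fst S = add_mset a M" and g0: "\<Gamma>0 = M + \<Gamma>"
            define S' where "S' = (M, snd S)"
            have G': "GI G lyn p pol S' (I S')"
              by (rule IS) (use slSS fS in \<open>auto simp: S'_def slang_def Rm_iff sweight_def\<close>)
            have sv: "svars bb S' \<subseteq> svars bb S" for bb using fS by (auto simp: S'_def svars_def)
            have "derivable G (\<Gamma>, add_mset (I S') \<Delta>)"
              by (rule GI_use[OF G' sl q]) (use pr g0 e2 in \<open>simp add: S'_def\<close>)
            moreover have "derivable G (add_mset (I S') (fst S), snd S)"
            proof -
              have "derivable G (add_mset (I S') M, snd S)"
                using GI_der[OF G'] by (simp add: S'_def)
              then have "derivable G (add_mset a (add_mset (I S') M), snd S)"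
                by (rule dLW) (use slSS fS G' in \<open>auto simp: slang_def GI_def\<close>)
              then show ?thesis using fS by (simp add: add_mset_commute)
            qed
            moreover have "I S' \<in> C"
              by (rule CL[of a]) (use fS in \<open>simp_all add: candL_def S'_def\<close>)
            ultimately show ?thesis using GI_cand[OF G' sv] sl by (intro fin[of "I S'"]) auto
          next
            fix \<Gamma>' assume gG: "\<Gamma> = add_mset a \<Gamma>'" and g0: "\<Gamma>0 = fst S + \<Gamma>'"
            have sl2: "slang G (\<Gamma>', \<Delta>)" using sl gG by (auto simp: slang_def)
            have q2: "qf lyn p pol (\<Gamma>', \<Delta>)"
              by (rule qf_mono[OF q]) (use gG in \<open>auto simp: svars_def\<close>)
            have "derivable G (\<Gamma>', add_mset t \<Delta>)"
              by (rule ih[OF _ _ sl2 q2]) (use lw g0 e2 in auto)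
            then have "derivable G (add_mset a \<Gamma>', add_mset t \<Delta>)"
              by (rule dLW) (use slt gG in \<open>auto simp: slang_def\<close>)
            then show ?thesis using gG by simp
          qed
        next
          case (rw \<Gamma>0 \<Delta>0 a)
          have e1: "\<Gamma>0 = fst S + \<Gamma>" and e2: "add_mset a \<Delta>0 = snd S + \<Delta>"
            using ceq rw by auto
          have pr: "derivable G (\<Gamma>0, \<Delta>0)" using prem rw by auto
          from mset_split[OF e2] show ?thesis
          proof (elim disjE exE conjE)
            fix N assume fS: "snd S = add_mset a N" and d0: "\<Delta>0 = N + \<Delta>"
            define S' where "S' = (fst S, N)"
            have G': "GI G lyn p pol S' (I S')"
              by (rule IS) (use slSS fS in \<open>auto simp: S'_def slang_def Rm_iff sweight_def\<close>)
            have sv: "svars bb S' \<subseteq> svars bb S" for bb using fS by (auto simp: S'_def svars_def)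
            have "derivable G (\<Gamma>, add_mset (I S') \<Delta>)"
              by (rule GI_use[OF G' sl q]) (use pr e1 d0 in \<open>simp add: S'_def\<close>)
            moreover have "derivable G (add_mset (I S') (fst S), snd S)"
            proof -
              have "derivable G (add_mset (I S') (fst S), N)"
                using GI_der[OF G'] by (simp add: S'_def)
              then have "derivable G (add_mset (I S') (fst S), add_mset a N)"
                by (rule dRW) (use slSS fS G' in \<open>auto simp: slang_def GI_def\<close>)
              then show ?thesis using fS by simp
            qed
            moreover have "I S' \<in> C"
              by (rule CR[of a]) (use fS in \<open>simp_all add: candR_def S'_def\<close>)
            ultimately show ?thesis using GI_cand[OF G' sv] sl by (intro fin[of "I S'"]) auto
          next
            fix \<Delta>' assume gD: "\<Delta> = add_mset a \<Delta>'" and d0: "\<Delta>0 = snd S + \<Delta>'"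
            have sl2: "slang G (\<Gamma>, \<Delta>')" using sl gD by (auto simp: slang_def)
            have q2: "qf lyn p pol (\<Gamma>, \<Delta>')"
              by (rule qf_mono[OF q]) (use gD in \<open>auto simp: svars_def\<close>)
            have "derivable G (\<Gamma>, add_mset t \<Delta>')"
              by (rule ih[OF _ _ sl2 q2]) (use rw e1 d0 in auto)
            then have "derivable G (\<Gamma>, add_mset a (add_mset t \<Delta>'))"
              by (rule dRW) (use slt gD in \<open>auto simp: slang_def\<close>)
            then show ?thesis using gD by (simp add: add_mset_commute)
          qed
        qed (use g3w in \<open>simp_all add: g3w_rules_def\<close>)
      qed
    qed
  qed
  show ?case
    using langt pft vct dert key by (auto simp: GI_def sprod_def)
qed


theorem mainTheorem6:
  fixes G :: calculus
  shows "(MULIP G \<longrightarrow> ULIP G) \<and> (MUIP G \<longrightarrow> UIP G)"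
proof (intro conjI impI)
  assume A: "MULIP G"
  show "ULIP G"
    unfolding ULIP_def
  proof (intro allI impI)
    fix S p pol assume sl: "slang G S"
    have "\<exists>t. GI G True p pol S t"
    proof (rule main[OF _ sl])
      fix S' assume "slang G S'"
      then show "\<exists>t. (\<forall>S''. slang G S'' \<longrightarrow> sweight S'' < sweight S' \<longrightarrow> (\<exists>t'. GI G True p pol S'' t'))
          \<longrightarrow> GIw G (modal_rules G) True p pol S' t"
        using A unfolding MULIP_def Ucond_def ULI_GI ULIw_GIw by blast
    qed
    then show "\<exists>t. ULI G p pol S t" by (simp add: ULI_GI)
  qed
next
  assume A: "MUIP G"
  show "UIP G"
    unfolding UIP_def
  proof (intro allI impI)
    fix S p assume sl: "slang G S"
    have "\<exists>t. GI G False p True S t"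
    proof (rule main[OF _ sl])
      fix S' assume "slang G S'"
      then show "\<exists>t. (\<forall>S''. slang G S'' \<longrightarrow> sweight S'' < sweight S' \<longrightarrow> (\<exists>t'. GI G False p True S'' t'))
          \<longrightarrow> GIw G (modal_rules G) False p True S' t"
        using A unfolding MUIP_def Ucond_np_def UI_GI[where pol=True] UIw_GIw[where pol=True] by blast
    qed
    then show "\<exists>t. UI G p S t" by (simp add: UI_GI[where pol=True])
  qed
qed

end
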